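(* In the setting below, there is an absolute constant $C>0$ such that, almost surely, conditionally on $(\mathbf L,\pi)$ the random variable $U^{\mathbf L,\pi}_{n_1}$ is $\mathrm{SE}\big(C\max\{d^{1/2}\sigma^2/n_1,\ (\mathbb E[U_{n_1,n_2}])^{1/2}\sigma/n_1^{1/2}\}\big)$.
   Context: Setting: $2\le n_1\le n_2$; $\mathbf Z_1,\dots,\mathbf Z_{n_1},\mathbf W_1,\dots,\mathbf W_{n_2}$ mutually independent random vectors in $\mathbb R^d$, the $\mathbf Z_i$ identically distributed, the $\mathbf W_{i'}$ identically distributed, each $\mathrm{SG}(\sigma^2)$ (a random vector $\mathbf X$ is $\mathrm{SG}(\sigma^2)$ if $\mathbb E[\exp\{\theta\mathbf v^T(\mathbf X-\mathbb E\mathbf X)\}]\le\exp(\theta^2\|\mathbf v\|_2^2\sigma^2/2)$ for all $\mathbf v,\theta$). Pooled sample $\mathbf D_i=\mathbf Z_i$ ($i\le n_1$), $\mathbf D_{n_1+i'}=\mathbf W_{i'}$. $\pi$ is uniform on $S_{n_1+n_2}$ and $\mathbf L=(l_1,\dots,l_{n_1})$ a uniformly random $n_1$-tuple of distinct elements of $[n_2]$, with $\pi$, $\mathbf L$, data mutually independent. $U^{\mathbf L,\pi}_{n_1}=\frac{1}{n_1(n_1-1)}\sum_{i\ne j,\ i,j\in[n_1]}(\mathbf D_{\pi(i)}-\mathbf D_{\pi(n_1+l_i)})^T(\mathbf D_{\pi(j)}-\mathbf D_{\pi(n_1+l_j)})$, and $\mathbb E[U_{n_1,n_2}]=\|\mathbb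 E\mathbf Z_1-\mathbb E\mathbf W_1\|_2^2$. A real random variable $X$ is $\mathrm{SE}(\tau)$ (conditionally) if $\mathbb E[\exp\{\lambda(X-\mathbb EX)\}]\le\exp(\lambda^2\tau^2)$ for all $|\lambda|\le1/\tau$, expectations taken conditionally on $(\mathbf L,\pi)$. *)

theory Defs
  imports "HOL-Probability.Probability"
begin

text \<open>Vectors in R^d are represented as functions nat => real; only the
coordinates 0..d-1 matter. The measurable space of R^d is the product
PiM {..<d} (\<lambda>_. borel).\<close>

definition vec_space :: "nat \<Rightarrow> (nat \<Rightarrow> real) measure" where
  "vec_space d = PiM {..<d} (\<lambda>_. borel)"

definition vinner :: "nat \<Rightarrow> (nat \<Rightarrow> real) \<Rightarrow> (nat \<Rightarrow> real) \<Rightarrow> real" where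
  "vinner d x y = (\<Sum>k<d. x k * y k)"

definition vmean :: "nat \<Rightarrow> (nat \<Rightarrow> real) measure \<Rightarrow> nat \<Rightarrow> real" where
  "vmean d P = (\<lambda>k. if k < d then (\<integral>x. x k \<partial>P) else 0)"

definition subgaussian_vec :: "nat \<Rightarrow> (nat \<Rightarrow> real) measure \<Rightarrow> real \<Rightarrow> bool" where
  "subgaussian_vec d P s2 \<longleftrightarrow>
     (\<forall>k<d. integrable P (\<lambda>x. x k)) \<and>
     (\<forall>(v::nat \<Rightarrow> real) (\<theta>::real).
        (\<integral>\<^sup>+x. ennreal (exp (\<theta> * vinner d v (\<lambda>k. x k - vmean d P k))) \<partial>P)
          \<le> ennreal (exp (\<theta>\<^sup>2 * vinner d v v * s2 / 2)))"

text \<open>SE(tau): |lambda| <= 1/tau written as |lambda| * tau <= 1 (tau = 0 means all lambda).\<close>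
definition subexponential :: "'a measure \<Rightarrow> ('a \<Rightarrow> real) \<Rightarrow> real \<Rightarrow> bool" where
  "subexponential M X \<tau> \<longleftrightarrow>
     integrable M X \<and>
     (\<forall>t::real. \<bar>t\<bar> * \<tau> \<le> 1 \<longrightarrow>
        (\<integral>\<^sup>+\<omega>. ennreal (exp (t * (X \<omega> - (\<integral>\<omega>'. X \<omega>' \<partial>M)))) \<partial>M)
          \<le> ennreal (exp (t\<^sup>2 * \<tau>\<^sup>2)))"

text \<open>Joint law of the pooled sample D_0..D_{n1+n2-1} (0-based): D_i ~ P for i < n1,
  D_i ~ Q otherwise, all independent.\<close>
definition pooled_law :: "nat \<Rightarrow> nat \<Rightarrow> (nat \<Rightarrow> real) measure \<Rightarrow> (nat \<Rightarrow> real) measure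
    \<Rightarrow> (nat \<Rightarrow> nat \<Rightarrow> real) measure" where
  "pooled_law n1 n2 P Q = PiM {..<n1+n2} (\<lambda>i. if i < n1 then P else Q)"

definition U_stat :: "nat \<Rightarrow> nat \<Rightarrow> (nat \<Rightarrow> nat) \<Rightarrow> (nat \<Rightarrow> nat)
    \<Rightarrow> (nat \<Rightarrow> nat \<Rightarrow> real) \<Rightarrow> real" where
  "U_stat d n1 l \<pi> D =
     (\<Sum>i<n1. \<Sum>j\<in>{..<n1} - {i}.
        vinner d (\<lambda>k. D (\<pi> i) k - D (\<pi> (n1 + l i)) k)
                 (\<lambda>k. D (\<pi> j) k - D (\<pi> (n1 + l j)) k))
     / (real n1 * (real n1 - 1))"

end

theory Submission
  imports Defs
begin
lemma pow_fact_le_exp: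
  fixes x :: real assumes "0 \<le> x" shows "x ^ n / fact n \<le> exp x"
proof -
  have s: "(\<lambda>k. x ^ k /\<^sub>R fact k) sums exp x" by (rule exp_converges)
  have "x ^ n / fact n = (\<Sum>k\<in>{n}. x ^ k / fact k)" by simp
  also have "\<dots> \<le> (\<Sum>k. x ^ k / fact k)"
    apply (rule sum_le_suminf)
    using s by (auto simp: sums_iff divide_inverse mult.commute assms)
  also have "\<dots> = exp x" using s by (simp add: sums_iff divide_inverse mult.commute)
  finally show ?thesis .
qed

lemma even_pow_le_cosh:
  fixes z \<theta> :: real assumes "0 \<le> \<theta>"
  shows "(\<theta> * z) ^ (2*m) / fact (2*m) \<le> exp (\<theta> * z) + exp (- (\<theta> * z))"
proof -
  have "(\<theta> * z) ^ (2*m) = \<bar>\<theta> * z\<bar> ^ (2*m)"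
    by (simp add: power_mult power2_abs)
  hence "(\<theta> * z) ^ (2*m) / fact (2*m) \<le> exp \<bar>\<theta> * z\<bar>"
    using pow_fact_le_exp[of "\<bar>\<theta> * z\<bar>" "2*m"] by simp
  also have "\<dots> \<le> exp (\<theta> * z) + exp (- (\<theta> * z))"
    by (cases "\<theta> * z \<ge> 0") (auto simp: abs_if add_increasing add_increasing2)
  finally show ?thesis .
qed

lemma fact_double_le: "(fact (2*m) :: real) \<le> 4 ^ m * fact m * real m ^ m"
proof -
  have "fact m * fact (2*m - m) * real (2*m choose m) = fact (2*m)"
    using binomial_fact_lemma[of m "2*m"] by (metis le_add2 mult_2 of_nat_fact of_nat_mult)
  hence e: "fact (2*m) = fact m * fact m * real (2*m choose m)" by simp
  have "real (2*m choose m) \<le> 4 ^ m"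
    using binomial_le_pow2[of "2*m" m] by (simp add: power_mult of_nat_le_iff[symmetric] flip: of_nat_power)
  moreover have "(fact m :: real) \<le> real m ^ m" using fact_le_power[of m] by simp
  ultimately have "fact m * fact m * real (2*m choose m) \<le> fact m * real m ^ m * 4 ^ m"
    by (intro mult_mono) auto
  thus ?thesis using e by (simp add: mult_ac)
qed

lemma moment_bound:
  assumes P: "prob_space M" and Zm: "Z \<in> borel_measurable M" and bpos: "\<beta> > 0" and m: "m \<ge> 1"
  and mgf: "\<And>\<theta>. (\<integral>\<^sup>+x. ennreal (exp (\<theta> * Z x)) \<partial>M) \<le> ennreal (exp (\<theta>\<^sup>2 * \<beta>))"
  shows "(\<integral>\<^sup>+x. ennreal ((Z x) ^ (2*m)) \<partial>M) \<le> ennreal (2 * fact (2*m) * (exp 1 * \<beta> / m) ^ m)"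
proof -
  define \<theta> where "\<theta> = sqrt (m / \<beta>)"
  have tpos: "\<theta> > 0" using bpos m by (simp add: \<theta>_def)
  have t2: "\<theta>\<^sup>2 = m / \<beta>" using bpos by (simp add: \<theta>_def)
  have t2m: "\<theta> ^ (2*m) = (m/\<beta>) ^ m" by (simp add: power_mult t2)
  define K where "K = fact (2*m) / \<theta> ^ (2*m)"
  have Kpos: "K \<ge> 0" using tpos by (simp add: K_def)
  have pw: "(Z x) ^ (2*m) \<le> K * (exp (\<theta> * Z x) + exp (- \<theta> * Z x))" for x
  proof -
    have "(\<theta> * Z x) ^ (2*m) / fact (2*m) \<le> exp (\<theta> * Z x) + exp (- (\<theta> * Z x))"
      using even_pow_le_cosh[of \<theta> "Z x" m] tpos by simp
    hence "\<theta> ^ (2*m) * (Z x) ^ (2*m) \<le> fact (2*m) * (exp (\<theta> * Z x) + exp (- \<theta> * Z x))"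
      by (simp add: power_mult_distrib divide_le_eq mult.commute)
    thus ?thesis using tpos unfolding K_def
      by (simp add: le_divide_eq mult.commute)
  qed
  have "(\<integral>\<^sup>+x. ennreal ((Z x) ^ (2*m)) \<partial>M) \<le> (\<integral>\<^sup>+x. ennreal K * (ennreal (exp (\<theta> * Z x)) + ennreal (exp (- \<theta> * Z x))) \<partial>M)"
    apply (rule nn_integral_mono)
    using pw Kpos by (simp add: ennreal_mult[symmetric] ennreal_plus[symmetric] ennreal_leI del: ennreal_plus)
  also have "\<dots> = ennreal K * ((\<integral>\<^sup>+x. ennreal (exp (\<theta> * Z x)) \<partial>M) + (\<integral>\<^sup>+x. ennreal (exp (- \<theta> * Z x)) \<partial>M))"
    using Zm by (simp add: nn_integral_cmult nn_integral_add)
  also have "\<dots> \<le> ennreal K * (ennreal (exp (\<theta>\<^sup>2 * \<beta>)) + ennreal (exp ((-\<theta>)\<^sup>2 * \<beta>)))"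
    by (intro mult_left_mono add_mono mgf) auto
  also have "\<dots> = ennreal (2 * fact (2*m) * (exp 1 * \<beta> / m) ^ m)"
  proof -
    have "\<theta>\<^sup>2 * \<beta> = m" using bpos t2 by simp
    hence "K * (exp (\<theta>\<^sup>2 * \<beta>) + exp ((-\<theta>)\<^sup>2 * \<beta>)) = 2 * fact (2*m) * (exp 1 * \<beta> / m) ^ m"
      unfolding K_def t2m using bpos m
      by (simp add: exp_of_nat_mult[symmetric] power_divide power_mult_distrib field_simps)
    moreover have "ennreal K * (ennreal (exp (\<theta>\<^sup>2 * \<beta>)) + ennreal (exp ((-\<theta>)\<^sup>2 * \<beta>)))
       = ennreal (K * (exp (\<theta>\<^sup>2 * \<beta>) + exp ((-\<theta>)\<^sup>2 * \<beta>)))"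
      using Kpos by (simp add: ennreal_mult ennreal_plus[symmetric] del: ennreal_plus)
    ultimately show ?thesis by (simp add: mult.left_commute[of K] mult.assoc)
  qed
  finally show ?thesis .
qed

lemma term_bound:
  assumes m: "m \<ge> 1" and s: "s \<ge> 0" and b: "\<beta> > 0"
  shows "s ^ m / fact m * (2 * fact (2*m) * (exp 1 * \<beta> / m) ^ m) \<le> 2 * (12 * s * \<beta>) ^ m"
proof -
  have mp: "real m > 0" using m by simp
  have "s ^ m / fact m * (2 * fact (2*m) * (exp 1 * \<beta> / m) ^ m)
      = 2 * (fact (2*m) / (fact m * real m ^ m)) * (exp 1 * s * \<beta>) ^ m"
    using mp by (simp add: power_divide power_mult_distrib field_simps)
  also have "\<dots> \<le> 2 * 4 ^ m * (3 * s * \<beta>) ^ m"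
  proof -
    have A: "fact (2*m) / (fact m * real m ^ m) \<le> (4::real) ^ m"
      using fact_double_le[of m] mp by (simp add: divide_le_eq mult_ac)
    have B: "exp 1 * s * \<beta> \<le> 3 * s * \<beta>"
      using exp_le s b by (intro mult_right_mono) auto
    have B': "(exp 1 * s * \<beta>) ^ m \<le> (3 * s * \<beta>) ^ m"
      by (rule power_mono[OF B]) (use s b in simp)
    have "(fact (2*m) / (fact m * real m ^ m)) * (exp 1 * s * \<beta>) ^ m \<le> 4 ^ m * (3 * s * \<beta>) ^ m"
      by (rule mult_mono[OF A B']) (use s b in auto)
    thus ?thesis by simp
  qed
  also have "\<dots> = 2 * (12 * s * \<beta>) ^ m"
    by (simp add: power_mult_distrib[symmetric] mult_ac)
  finally show ?thesis .
qed

lemma sq_mgf_pos: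
  assumes P: "prob_space M" and Zm: "Z \<in> borel_measurable M" and bpos: "\<beta> > 0"
  and s: "s \<ge> 0" and sb: "s * \<beta> \<le> 1/64"
  and mgf: "\<And>\<theta>. (\<integral>\<^sup>+x. ennreal (exp (\<theta> * Z x)) \<partial>M) \<le> ennreal (exp (\<theta>\<^sup>2 * \<beta>))"
  shows "(\<integral>\<^sup>+x. ennreal (exp (s * (Z x)\<^sup>2)) \<partial>M) \<le> ennreal (exp (64 * s * \<beta>))"
proof -
  interpret prob_space M by fact
  define r where "r = 12 * s * \<beta>"
  have r0: "0 \<le> r" using s bpos by (simp add: r_def)
  have r1: "r \<le> 3/16" unfolding r_def using sb by (simp add: mult_ac)
  define bb where "bb m = (if m = 0 then 1 else 2 * r ^ m)" for m :: nat
  have ex: "ennreal (exp (s * (Z x)\<^sup>2)) = (\<Sum>m. ennreal (s ^ m / fact m * (Z x) ^ (2*m)))" for x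
  proof -
    have "(\<lambda>k. (s * (Z x)\<^sup>2) ^ k /\<^sub>R fact k) sums exp (s * (Z x)\<^sup>2)" by (rule exp_converges)
    moreover have "(\<lambda>k. (s * (Z x)\<^sup>2) ^ k /\<^sub>R fact k) = (\<lambda>k. s ^ k / fact k * (Z x) ^ (2*k))"
      by (rule ext) (simp add: power_mult_distrib power_mult[symmetric] divide_inverse mult_ac)
    ultimately have "(\<lambda>k. s ^ k / fact k * (Z x) ^ (2*k)) sums exp (s * (Z x)\<^sup>2)" by simp
    hence "(\<lambda>k. ennreal (s ^ k / fact k * (Z x) ^ (2*k))) sums ennreal (exp (s * (Z x)\<^sup>2))"
      using s by (subst sums_ennreal) (auto simp: power_mult)
    thus ?thesis by (simp add: sums_iff)
  qed
  have "(\<integral>\<^sup>+x. ennreal (exp (s * (Z x)\<^sup>2)) \<partial>M) = (\<integral>\<^sup>+x. (\<Sum>m. ennreal (s ^ m / fact m * (Z x) ^ (2*m))) \<partial>M)"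
    by (simp add: ex)
  also have "\<dots> = (\<Sum>m. (\<integral>\<^sup>+x. ennreal (s ^ m / fact m * (Z x) ^ (2*m)) \<partial>M))"
    by (rule nn_integral_suminf) (use Zm in measurable)
  also have "\<dots> \<le> (\<Sum>m. ennreal (bb m))"
  proof (rule suminf_le)
    fix m
    show "(\<integral>\<^sup>+x. ennreal (s ^ m / fact m * (Z x) ^ (2*m)) \<partial>M) \<le> ennreal (bb m)"
    proof (cases "m = 0")
      case True thus ?thesis by (simp add: bb_def emeasure_space_1)
    next
      case False
      hence m1: "m \<ge> 1" by simp
      have "(\<integral>\<^sup>+x. ennreal (s ^ m / fact m * (Z x) ^ (2*m)) \<partial>M)
          = ennreal (s ^ m / fact m) * (\<integral>\<^sup>+x. ennreal ((Z x) ^ (2*m)) \<partial>M)"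
        using s Zm by (subst nn_integral_cmult[symmetric]) (auto simp: ennreal_mult[symmetric] intro!: nn_integral_cong)
      also have "\<dots> \<le> ennreal (s ^ m / fact m) * ennreal (2 * fact (2*m) * (exp 1 * \<beta> / m) ^ m)"
        by (intro mult_left_mono moment_bound[OF P Zm bpos m1 mgf]) auto
      also have "\<dots> = ennreal (s ^ m / fact m * (2 * fact (2*m) * (exp 1 * \<beta> / m) ^ m))"
        by (rule ennreal_mult[symmetric]) (use s bpos in auto)
      also have "\<dots> \<le> ennreal (bb m)"
        using term_bound[OF m1 s bpos] False by (simp add: bb_def r_def ennreal_leI)
      finally show ?thesis .
    qed
  qed auto
  also have "\<dots> = ennreal (\<Sum>m. bb m)"
  proof (rule suminf_ennreal2)
    show "0 \<le> bb m" for m using r0 by (simp add: bb_def)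
    have "summable (\<lambda>m. 2 * r ^ m)" using r0 r1 by (intro summable_mult summable_geometric) auto
    thus "summable bb"
      by (rule summable_comparison_test'[where N=1]) (use r0 in \<open>auto simp: bb_def\<close>)
  qed
  also have "(\<Sum>m. bb m) = 2 / (1 - r) - 1"
  proof -
    have g: "(\<lambda>m. 2 * r ^ m) sums (2 * (1 / (1 - r)))" using r0 r1 by (intro sums_mult geometric_sums) auto
    have o: "(\<lambda>m. if m = 0 then (1::real) else 0) sums 1" using sums_single[of 0 "\<lambda>_. 1::real"] by simp
    have "(\<lambda>m. 2 * r ^ m - (if m = 0 then 1 else 0)) sums (2 * (1 / (1 - r)) - 1)"
      by (rule sums_diff[OF g o])
    moreover have "(\<lambda>m. 2 * r ^ m - (if m = 0 then 1 else 0)) = bb" by (auto simp: bb_def)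
    ultimately show ?thesis by (simp add: sums_iff)
  qed
  also have "ennreal (2 / (1 - r) - 1) \<le> ennreal (exp (64 * s * \<beta>))"
  proof (rule ennreal_leI)
    define x where "x = s * \<beta>"
    have x0: "0 \<le> x" "x \<le> 1/64" using s bpos sb by (auto simp: x_def)
    have rx: "r = 12 * x" by (simp add: r_def x_def)
    have "2 / (1 - r) - 1 \<le> 1 + 30 * x"
    proof -
      have "x * (x * 60) \<le> x * 1" using x0 by (intro mult_left_mono) auto
      thus ?thesis using x0 unfolding rx by (simp add: field_simps)
    qed
    also have "\<dots> \<le> exp (30 * x)" using exp_ge_add_one_self[of "30*x"] by simp
    also have "\<dots> \<le> exp (64 * s * \<beta>)" using x0 by (simp add: x_def mult_ac)
    finally show "2 / (1 - r) - 1 \<le> exp (64 * s * \<beta>)" .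
  qed
  finally show ?thesis .
qed

lemma sq_mgf:
  assumes P: "prob_space M" and Zm: "Z \<in> borel_measurable M" and b0: "\<beta> \<ge> 0"
  and s: "s \<ge> 0" and sb: "s * \<beta> \<le> 1/64"
  and mgf: "\<And>\<theta>. (\<integral>\<^sup>+x. ennreal (exp (\<theta> * Z x)) \<partial>M) \<le> ennreal (exp (\<theta>\<^sup>2 * \<beta>))"
  shows "(\<integral>\<^sup>+x. ennreal (exp (s * (Z x)\<^sup>2)) \<partial>M) \<le> ennreal (exp (64 * s * \<beta>))"
proof (cases "\<beta> > 0")
  case True thus ?thesis using sq_mgf_pos[OF P Zm True s sb mgf] by simp
next
  case False
  hence bz: "\<beta> = 0" using b0 by simp
  interpret prob_space M by fact
  show ?thesis
  proof (cases "s = 0")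
    case True thus ?thesis by (simp add: emeasure_space_1)
  next
    case False
    hence sp: "s > 0" using s by simp
    have "(\<integral>\<^sup>+x. ennreal (exp (s * (Z x)\<^sup>2)) \<partial>M) \<le> 1"
    proof (rule ennreal_le_epsilon)
      fix e :: real assume e: "0 < e"
      define b' where "b' = min 1 e / (128 * s)"
      have b'p: "b' > 0" using e sp by (simp add: b'_def)
      have sb': "s * b' = min 1 e / 128" using sp by (simp add: b'_def)
      have "(\<integral>\<^sup>+x. ennreal (exp (s * (Z x)\<^sup>2)) \<partial>M) \<le> ennreal (exp (64 * s * b'))"
      proof (rule sq_mgf_pos[OF P Zm b'p s])
        show "s * b' \<le> 1/64" using sb' by simp
        fix \<theta>
        have "(\<integral>\<^sup>+x. ennreal (exp (\<theta> * Z x)) \<partial>M) \<le> ennreal (exp (\<theta>\<^sup>2 * \<beta>))" by (rule mgf)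
        also have "\<dots> \<le> ennreal (exp (\<theta>\<^sup>2 * b'))" using bz b'p by (intro ennreal_leI) simp
        finally show "(\<integral>\<^sup>+x. ennreal (exp (\<theta> * Z x)) \<partial>M) \<le> ennreal (exp (\<theta>\<^sup>2 * b'))" .
      qed
      also have "\<dots> \<le> ennreal (1 + e)"
      proof (rule ennreal_leI)
        have q: "64 * s * b' = min 1 e / 2" using sb' by (simp add: mult_ac)
        have "exp (min 1 e / 2) \<le> 1 + 2 * (min 1 e / 2)"
          by (rule real_exp_bound_lemma) (use e in auto)
        also have "\<dots> \<le> 1 + e" by simp
        finally show "exp (64 * s * b') \<le> 1 + e" unfolding q .
      qed
      also have "\<dots> = 1 + ennreal e" using e by (simp add: ennreal_plus)
      finally show "(\<integral>\<^sup>+x. ennreal (exp (s * (Z x)\<^sup>2)) \<partial>M) \<le> 1 + ennreal e" .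
    qed
    thus ?thesis using bz by simp
  qed
qed

lemma exp_avg_le:
  fixes y :: "'a \<Rightarrow> real"
  assumes "finite A" "A \<noteq> {}"
  shows "exp ((\<Sum>i\<in>A. y i) / card A) \<le> (\<Sum>i\<in>A. exp (y i)) / card A"
proof -
  have c: "card A > 0" using assms by (simp add: card_gt_0_iff)
  have "exp (\<Sum>i\<in>A. (1 / card A) *\<^sub>R y i) \<le> (\<Sum>i\<in>A. (1 / card A) * exp (y i))"
    by (rule convex_on_sum[OF assms exp_convex]) (use c in auto)
  moreover have "(\<Sum>i\<in>A. (1 / card A) *\<^sub>R y i) = (\<Sum>i\<in>A. y i) / card A"
    by (simp add: sum_divide_distrib)
  moreover have "(\<Sum>i\<in>A. (1 / card A) * exp (y i)) = (\<Sum>i\<in>A. exp (y i)) / card A"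
    by (simp add: sum_divide_distrib)
  ultimately show ?thesis by simp
qed

lemma vinner_zero_left[simp]: "vinner d (\<lambda>_. 0) y = 0" by (simp add: vinner_def)

lemma prod_mono_ennreal:
  fixes f g :: "'a \<Rightarrow> ennreal"
  shows "(\<And>i. i \<in> A \<Longrightarrow> f i \<le> g i) \<Longrightarrow> prod f A \<le> prod g A"
  by (induct A rule: infinite_finite_induct) (auto intro!: mult_mono)

locale pset =
  fixes d :: nat and \<sigma> :: real and M :: "nat \<Rightarrow> (nat \<Rightarrow> real) measure"
  assumes Mprob: "\<And>j. prob_space (M j)"
  and Msets: "\<And>j. sets (M j) = sets (vec_space d)"
  and Msg: "\<And>j. subgaussian_vec d (M j) (\<sigma>\<^sup>2)"
begin

definition m :: "nat \<Rightarrow> nat \<Rightarrow> real" where "m j = vmean d (M j)"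

lemma psf: "product_sigma_finite M"
  unfolding product_sigma_finite_def
  using Mprob prob_space_imp_sigma_finite by blast

lemma coord_meas: "k < d \<Longrightarrow> (\<lambda>x. x k) \<in> borel_measurable (M j)"
proof -
  assume k: "k < d"
  have "(\<lambda>x. x k) \<in> borel_measurable (vec_space d)"
    unfolding vec_space_def using k by (intro measurable_component_singleton) auto
  thus ?thesis using measurable_cong_sets[OF Msets[of j] refl] by blast
qed

lemma D_meas: "j \<in> J \<Longrightarrow> k < d \<Longrightarrow> (\<lambda>D. D j k) \<in> borel_measurable (PiM J M)"
  by (rule measurable_compose[OF measurable_component_singleton[of j J M] coord_meas[of k j]])

lemma vinner_meas:
  assumes "\<And>k. k < d \<Longrightarrow> (\<lambda>x. u x k) \<in> borel_measurable X"
    "\<And>k. k < d \<Longrightarrow> (\<lambda>x. v x k) \<in> borel_measurable X"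
  shows "(\<lambda>x. vinner d (u x) (v x)) \<in> borel_measurable X"
  unfolding vinner_def using assms by (intro borel_measurable_sum borel_measurable_times) auto

lemma e_meas: "(\<lambda>x. vinner d w (\<lambda>k. x k - m j k)) \<in> borel_measurable (M j)"
  by (rule vinner_meas) (auto intro!: borel_measurable_diff coord_meas)

lemma mgf_one:
  "(\<integral>\<^sup>+x. ennreal (exp (vinner d w (\<lambda>k. x k - m j k))) \<partial>M j) \<le> ennreal (exp (\<sigma>\<^sup>2 / 2 * vinner d w w))"
  using Msg[of j] unfolding subgaussian_vec_def m_def
  by (auto dest!: spec[of _ w] spec[of _ 1] simp: mult_ac)

lemma mgf_prod:
  assumes J: "finite J"
  shows "(\<integral>\<^sup>+D. ennreal (exp (\<Sum>j\<in>J. vinner d (w j) (\<lambda>k. D j k - m j k))) \<partial>PiM J M)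
         \<le> ennreal (exp (\<sigma>\<^sup>2 / 2 * (\<Sum>j\<in>J. vinner d (w j) (w j))))"
proof -
  interpret product_sigma_finite M by (rule psf)
  have "(\<integral>\<^sup>+D. ennreal (exp (\<Sum>j\<in>J. vinner d (w j) (\<lambda>k. D j k - m j k))) \<partial>PiM J M)
      = (\<integral>\<^sup>+D. (\<Prod>j\<in>J. ennreal (exp (vinner d (w j) (\<lambda>k. D j k - m j k)))) \<partial>PiM J M)"
    using J by (simp add: exp_sum prod_ennreal)
  also have "\<dots> = (\<Prod>j\<in>J. (\<integral>\<^sup>+x. ennreal (exp (vinner d (w j) (\<lambda>k. x k - m j k))) \<partial>M j))"
    by (rule product_nn_integral_prod[OF J]) (use e_meas in measurable)
  also have "\<dots> \<le> (\<Prod>j\<in>J. ennreal (exp (\<sigma>\<^sup>2 / 2 * vinner d (w j) (w j))))"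
    by (rule prod_mono_ennreal) (use mgf_one in auto)
  also have "\<dots> = ennreal (exp (\<sigma>\<^sup>2 / 2 * (\<Sum>j\<in>J. vinner d (w j) (w j))))"
    using J by (simp add: prod_ennreal exp_sum sum_distrib_left)
  finally show ?thesis .
qed

lemma mgf_inj:
  assumes J: "finite J" and A: "finite A" and inj: "inj_on g A" and sub: "g ` A \<subseteq> J"
  shows "(\<integral>\<^sup>+D. ennreal (exp (\<Sum>s\<in>A. vinner d (w s) (\<lambda>k. D (g s) k - m (g s) k))) \<partial>PiM J M)
         \<le> ennreal (exp (\<sigma>\<^sup>2 / 2 * (\<Sum>s\<in>A. vinner d (w s) (w s))))"
proof -
  define W where "W j = (if j \<in> g ` A then w (the_inv_into A g j) else (\<lambda>_. 0))" for j
  have Wg: "W (g s) = w s" if "s \<in> A" for s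
    using that inj by (simp add: W_def the_inv_into_f_f)
  have e1: "(\<Sum>j\<in>J. vinner d (W j) (\<lambda>k. D j k - m j k)) = (\<Sum>s\<in>A. vinner d (w s) (\<lambda>k. D (g s) k - m (g s) k))" for D
  proof -
    have "(\<Sum>j\<in>J. vinner d (W j) (\<lambda>k. D j k - m j k)) = (\<Sum>j\<in>g ` A. vinner d (W j) (\<lambda>k. D j k - m j k))"
      by (rule sum.mono_neutral_right) (use J sub in \<open>auto simp: W_def\<close>)
    also have "\<dots> = (\<Sum>s\<in>A. vinner d (w s) (\<lambda>k. D (g s) k - m (g s) k))"
      by (simp add: sum.reindex[OF inj] Wg)
    finally show ?thesis .
  qed
  have e2: "(\<Sum>j\<in>J. vinner d (W j) (W j)) = (\<Sum>s\<in>A. vinner d (w s) (w s))"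
  proof -
    have "(\<Sum>j\<in>J. vinner d (W j) (W j)) = (\<Sum>j\<in>g ` A. vinner d (W j) (W j))"
      by (rule sum.mono_neutral_right) (use J sub in \<open>auto simp: W_def\<close>)
    also have "\<dots> = (\<Sum>s\<in>A. vinner d (w s) (w s))"
      by (simp add: sum.reindex[OF inj] Wg)
    finally show ?thesis .
  qed
  show ?thesis using mgf_prod[OF J, of W] by (simp add: e1 e2)
qed

lemma mgf_pairs:
  fixes S :: "nat set" and a b :: "nat \<Rightarrow> nat"
  assumes J: "finite J" and S: "finite S" and ia: "inj_on a S" and ib: "inj_on b S"
    and ab: "\<And>i j. i \<in> S \<Longrightarrow> j \<in> S \<Longrightarrow> a i \<noteq> b j"
    and sa: "a ` S \<subseteq> J" and sb: "b ` S \<subseteq> J"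
  shows "(\<integral>\<^sup>+D. ennreal (exp (\<Sum>i\<in>S. vinner d (u i) (\<lambda>k. (D (a i) k - m (a i) k) - (D (b i) k - m (b i) k)))) \<partial>PiM J M)
         \<le> ennreal (exp (\<sigma>\<^sup>2 * (\<Sum>i\<in>S. vinner d (u i) (u i))))"
proof -
  define g where "g p = (if snd p then a (fst p) else b (fst p))" for p :: "nat \<times> bool"
  define w where "w p = (if snd p then u (fst p) else (\<lambda>k. - u (fst p) k))" for p :: "nat \<times> bool"
  have inj: "inj_on g (S \<times> UNIV)"
    unfolding inj_on_def g_def using ia ib ab by (auto simp: inj_on_def split: if_splits) (metis+)
  have sub: "g ` (S \<times> UNIV) \<subseteq> J" using sa sb by (auto simp: g_def)
  have fin: "finite (S \<times> (UNIV :: bool set))" using S by simp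
  have split: "(\<Sum>p\<in>S \<times> UNIV. F p) = (\<Sum>i\<in>S. F (i, True) + F (i, False))" for F :: "nat \<times> bool \<Rightarrow> real"
  proof -
    have "(\<Sum>p\<in>S \<times> UNIV. F p) = (\<Sum>i\<in>S. \<Sum>t\<in>UNIV. F (i,t))"
      by (simp add: sum.cartesian_product)
    thus ?thesis by (simp add: UNIV_bool add.commute)
  qed
  have e1: "(\<Sum>p\<in>S \<times> UNIV. vinner d (w p) (\<lambda>k. D (g p) k - m (g p) k))
     = (\<Sum>i\<in>S. vinner d (u i) (\<lambda>k. (D (a i) k - m (a i) k) - (D (b i) k - m (b i) k)))" for D
    unfolding split by (auto simp: w_def g_def vinner_def sum.distrib[symmetric] intro!: sum.cong) (simp add: algebra_simps)
  have e2: "(\<Sum>p\<in>S \<times> UNIV. vinner d (w p) (w p)) = 2 * (\<Sum>i\<in>S. vinner d (u i) (u i))"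
    unfolding split by (simp add: w_def vinner_def sum_distrib_left)
  show ?thesis using mgf_inj[OF J fin inj sub, of w] by (simp add: e1 e2)
qed

end

locale pair_setup = pset +
  fixes n N :: nat and a b :: "nat \<Rightarrow> nat"
  assumes n2: "2 \<le> n" and ia: "inj_on a {..<n}" and ib: "inj_on b {..<n}"
  and ab: "\<And>i j. i < n \<Longrightarrow> j < n \<Longrightarrow> a i \<noteq> b j"
  and ar: "\<And>i. i < n \<Longrightarrow> a i < N" and br: "\<And>i. i < n \<Longrightarrow> b i < N"
begin

definition xi :: "nat \<Rightarrow> (nat \<Rightarrow> nat \<Rightarrow> real) \<Rightarrow> nat \<Rightarrow> real" where
  "xi i D = (\<lambda>k. (D (a i) k - m (a i) k) - (D (b i) k - m (b i) k))"

lemma xi_meas: "a i \<in> J \<Longrightarrow> b i \<in> J \<Longrightarrow> k < d \<Longrightarrow> (\<lambda>D. xi i D k) \<in> borel_measurable (PiM J M)"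
  unfolding xi_def by (intro borel_measurable_diff D_meas borel_measurable_const) auto

lemma quad_S:
  assumes S: "S \<subseteq> {..<n}" and kc: "real d * \<kappa>\<^sup>2 * \<sigma>^4 * (real n)\<^sup>2 \<le> 1/64"
  shows "(\<integral>\<^sup>+D. ennreal (exp (\<kappa> * (\<Sum>i\<in>S. \<Sum>j\<in>{..<n} - S. vinner d (xi i D) (xi j D)))) \<partial>PiM {..<N} M)
         \<le> ennreal (exp (64 * real d * \<kappa>\<^sup>2 * \<sigma>^4 * (real n)\<^sup>2))"
proof -
  interpret product_sigma_finite M by (rule psf)
  define T where "T = {..<n} - S"
  define CS where "CS = a ` S \<union> b ` S"
  define CT where "CT = {..<N} - CS"
  have finS: "finite S" using S finite_subset by blast
  have finT: "finite T" by (simp add: T_def)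
  have finCS: "finite CS" using finS by (simp add: CS_def)
  have finCT: "finite CT" by (simp add: CT_def)
  have disj: "CT \<inter> CS = {}" by (auto simp: CT_def)
  have CSsub: "CS \<subseteq> {..<N}" using S ar br by (auto simp: CS_def)
  have un: "CT \<union> CS = {..<N}" using CSsub by (auto simp: CT_def)
  have TS: "T \<subseteq> {..<n}" by (auto simp: T_def)
  have aT: "a j \<in> CT" if "j \<in> T" for j
  proof -
    have jn: "j < n" "j \<notin> S" using that by (auto simp: T_def)
    have "a j \<notin> a ` S" using jn ia S by (auto simp: inj_on_def)
    moreover have "a j \<notin> b ` S" using jn ab S by auto
    ultimately show ?thesis using ar[OF jn(1)] by (auto simp: CT_def CS_def)
  qed
  have bT: "b j \<in> CT" if "j \<in> T" for j
  proof -
    have jn: "j < n" "j \<notin> S" using that by (auto simp: T_def)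
    have "b j \<notin> b ` S" using jn ib S by (auto simp: inj_on_def)
    moreover have "b j \<notin> a ` S" using jn ab S by (metis image_iff subsetD lessThan_iff)
    ultimately show ?thesis using br[OF jn(1)] by (auto simp: CT_def CS_def)
  qed
  have aS: "a i \<in> CS" "b i \<in> CS" if "i \<in> S" for i using that by (auto simp: CS_def)
  define X where "X x k = (\<Sum>j\<in>T. xi j x k)" for x k
  define f where "f D = ennreal (exp (\<kappa> * (\<Sum>i\<in>S. \<Sum>j\<in>T. vinner d (xi i D) (xi j D))))" for D
  have hm: "(\<lambda>D. \<Sum>i\<in>S. \<Sum>j\<in>T. vinner d (xi i D) (xi j D)) \<in> borel_measurable (PiM {..<N} M)"
    by (intro borel_measurable_sum vinner_meas xi_meas) (use S TS ar br in \<open>auto simp: T_def\<close>)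
  note hm[measurable]
  have fm: "f \<in> borel_measurable (PiM (CT \<union> CS) M)"
    unfolding f_def un by measurable
  have mergeS: "xi i (merge CT CS (x, y)) = xi i y" if "i \<in> S" for i x y
    using aS[OF that] disj by (auto simp: xi_def merge_def)
  have mergeT: "xi j (merge CT CS (x, y)) = xi j x" if "j \<in> T" for j x y
    using aT[OF that] bT[OF that] by (auto simp: xi_def merge_def)
  have bil: "\<kappa> * (\<Sum>i\<in>S. \<Sum>j\<in>T. vinner d (xi i y) (xi j x)) = (\<Sum>i\<in>S. vinner d (\<lambda>k. \<kappa> * X x k) (xi i y))" for x y
    unfolding X_def vinner_def
    by (simp add: sum_distrib_left sum_distrib_right mult_ac sum.swap[of _ T "{..<d}"])
  have inner: "(\<integral>\<^sup>+y. f (merge CT CS (x, y)) \<partial>PiM CS M)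
        \<le> ennreal (exp (\<sigma>\<^sup>2 * card S * \<kappa>\<^sup>2 * (\<Sum>k<d. (X x k)\<^sup>2)))" for x
  proof -
    have "(\<integral>\<^sup>+y. f (merge CT CS (x, y)) \<partial>PiM CS M)
       = (\<integral>\<^sup>+y. ennreal (exp (\<Sum>i\<in>S. vinner d (\<lambda>k. \<kappa> * X x k) (\<lambda>k. (y (a i) k - m (a i) k) - (y (b i) k - m (b i) k)))) \<partial>PiM CS M)"
      unfolding f_def using mergeS mergeT by (simp add: bil[symmetric] xi_def[symmetric])
    also have "\<dots> \<le> ennreal (exp (\<sigma>\<^sup>2 * (\<Sum>i\<in>S. vinner d (\<lambda>k. \<kappa> * X x k) (\<lambda>k. \<kappa> * X x k))))"
      by (rule mgf_pairs[OF finCS finS]) (use ia ib ab S in \<open>auto simp: CS_def intro: inj_on_subset\<close>)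
    also have "\<dots> = ennreal (exp (\<sigma>\<^sup>2 * card S * \<kappa>\<^sup>2 * (\<Sum>k<d. (X x k)\<^sup>2)))"
      by (simp add: vinner_def power2_eq_square sum_distrib_left mult_ac)
    finally show ?thesis .
  qed
  have Xm: "(\<lambda>x. X x k) \<in> borel_measurable (PiM CT M)" if "k < d" for k
    unfolding X_def by (intro borel_measurable_sum xi_meas) (use aT bT that in auto)
  have vu: "vinner d (\<lambda>k'. if k' = k then \<theta> else 0) v = \<theta> * v k" if "k < d" for k \<theta> v
  proof -
    have "(\<Sum>k'<d. (if k' = k then \<theta> else 0) * v k') = (\<Sum>k'<d. if k' = k then \<theta> * v k else 0)"
      by (rule sum.cong) auto
    thus ?thesis using that by (simp add: vinner_def)
  qed
  have vuu: "vinner d (\<lambda>k'. if k' = k then \<theta> else 0) (\<lambda>k'. if k' = k then \<theta> else 0) = \<theta>\<^sup>2" if "k < d" for k \<theta>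
    using vu[OF that] by (simp add: power2_eq_square)
  have mgfZ: "(\<integral>\<^sup>+x. ennreal (exp (\<theta> * X x k)) \<partial>PiM CT M) \<le> ennreal (exp (\<theta>\<^sup>2 * (card T * \<sigma>\<^sup>2)))"
    if k: "k < d" for k \<theta>
  proof -
    have "(\<integral>\<^sup>+x. ennreal (exp (\<theta> * X x k)) \<partial>PiM CT M)
      = (\<integral>\<^sup>+x. ennreal (exp (\<Sum>j\<in>T. vinner d (\<lambda>k'. if k' = k then \<theta> else 0) (\<lambda>k. (x (a j) k - m (a j) k) - (x (b j) k - m (b j) k)))) \<partial>PiM CT M)"
      unfolding X_def using k by (simp add: vu xi_def sum_distrib_left)
    also have "\<dots> \<le> ennreal (exp (\<sigma>\<^sup>2 * (\<Sum>j\<in>T. vinner d (\<lambda>k'. if k' = k then \<theta> else 0) (\<lambda>k'. if k' = k then \<theta> else 0))))"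
      by (rule mgf_pairs[OF finCT finT inj_on_subset[OF ia TS] inj_on_subset[OF ib TS]]) (use ab TS aT bT in auto)
    also have "\<dots> = ennreal (exp (\<theta>\<^sup>2 * (card T * \<sigma>\<^sup>2)))"
      using k by (simp add: vuu mult_ac)
    finally show ?thesis .
  qed
  have PCT: "prob_space (PiM CT M)" by (rule prob_space_PiM) (rule Mprob)
  have cardS: "card S \<le> n" using card_mono[OF finite_lessThan S] by simp
  have cardT: "card T \<le> n" using card_mono[OF finite_lessThan TS] by simp
  define c where "c = \<sigma>\<^sup>2 * card S * \<kappa>\<^sup>2"
  have c0: "c \<ge> 0" by (simp add: c_def)
  have keyprod: "real d * c * (card T * \<sigma>\<^sup>2) \<le> real d * \<kappa>\<^sup>2 * \<sigma>^4 * (real n)\<^sup>2"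
  proof -
    have "real (card S) * real (card T) \<le> real n * real n"
      using cardS cardT by (intro mult_mono) auto
    hence "real d * \<kappa>\<^sup>2 * \<sigma>^4 * (real (card S) * real (card T)) \<le> real d * \<kappa>\<^sup>2 * \<sigma>^4 * (real n * real n)"
      by (intro mult_left_mono) auto
    thus ?thesis by (simp add: c_def power2_eq_square power4_eq_xxxx mult_ac)
  qed
  have outer: "(\<integral>\<^sup>+x. ennreal (exp (c * (\<Sum>k<d. (X x k)\<^sup>2))) \<partial>PiM CT M)
     \<le> ennreal (exp (64 * real d * \<kappa>\<^sup>2 * \<sigma>^4 * (real n)\<^sup>2))"
  proof (cases "d = 0")
    case True
    interpret prob_space "PiM CT M" by (rule PCT)
    show ?thesis using True by (simp add: emeasure_space_1)
  next
    case False
    hence dp: "real d > 0" by simp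
    have pw: "ennreal (exp (c * (\<Sum>k<d. (X x k)\<^sup>2))) \<le> (\<Sum>k<d. ennreal (1 / real d) * ennreal (exp (real d * c * (X x k)\<^sup>2)))" for x
    proof -
      have "exp (c * (\<Sum>k<d. (X x k)\<^sup>2)) = exp ((\<Sum>k<d. real d * c * (X x k)\<^sup>2) / card {..<d})"
        using dp by (simp add: sum_distrib_left[symmetric] mult.assoc)
      also have "\<dots> \<le> (\<Sum>k<d. exp (real d * c * (X x k)\<^sup>2)) / card {..<d}"
        by (rule exp_avg_le) (use False in auto)
      also have "\<dots> = (\<Sum>k<d. 1 / real d * exp (real d * c * (X x k)\<^sup>2))"
        by (simp add: sum_divide_distrib)
      finally show ?thesis
        by (simp add: ennreal_mult[symmetric] sum_ennreal ennreal_leI del: ennreal_1)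
    qed
    have "(\<integral>\<^sup>+x. ennreal (exp (c * (\<Sum>k<d. (X x k)\<^sup>2))) \<partial>PiM CT M)
       \<le> (\<integral>\<^sup>+x. (\<Sum>k<d. ennreal (1 / real d) * ennreal (exp (real d * c * (X x k)\<^sup>2))) \<partial>PiM CT M)"
      by (rule nn_integral_mono) (rule pw)
    also have "\<dots> = (\<Sum>k<d. ennreal (1 / real d) * (\<integral>\<^sup>+x. ennreal (exp (real d * c * (X x k)\<^sup>2)) \<partial>PiM CT M))"
      by (subst nn_integral_sum) (use Xm in \<open>auto intro!: sum.cong nn_integral_cmult\<close>)
    also have "\<dots> \<le> (\<Sum>k<d. ennreal (1 / real d) * ennreal (exp (64 * (real d * c) * (card T * \<sigma>\<^sup>2))))"
    proof (intro sum_mono mult_left_mono)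
      fix k assume "k \<in> {..<d}"
      hence k: "k < d" by simp
      show "(\<integral>\<^sup>+x. ennreal (exp (real d * c * (X x k)\<^sup>2)) \<partial>PiM CT M) \<le> ennreal (exp (64 * (real d * c) * (card T * \<sigma>\<^sup>2)))"
        by (rule sq_mgf[OF PCT Xm[OF k] _ _ _ mgfZ[OF k]]) (use c0 keyprod kc in auto)
    qed auto
    also have "\<dots> = ennreal (\<Sum>k<d. 1 / real d * exp (64 * (real d * c) * (card T * \<sigma>\<^sup>2)))"
      by (subst sum_ennreal[symmetric]) (simp, rule sum.cong[OF refl], rule ennreal_mult[symmetric], auto)
    also have "\<dots> = ennreal (exp (64 * (real d * c) * (card T * \<sigma>\<^sup>2)))"
      using dp by simp
    also have "\<dots> \<le> ennreal (exp (64 * real d * \<kappa>\<^sup>2 * \<sigma>^4 * (real n)\<^sup>2))"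
      using keyprod by (intro ennreal_leI) simp
    finally show ?thesis .
  qed
  have "(\<integral>\<^sup>+D. ennreal (exp (\<kappa> * (\<Sum>i\<in>S. \<Sum>j\<in>{..<n} - S. vinner d (xi i D) (xi j D)))) \<partial>PiM {..<N} M)
      = integral\<^sup>N (PiM (CT \<union> CS) M) f" unfolding un f_def T_def ..
  also have "\<dots> = (\<integral>\<^sup>+x. (\<integral>\<^sup>+y. f (merge CT CS (x, y)) \<partial>PiM CS M) \<partial>PiM CT M)"
    by (rule product_nn_integral_fold[OF disj finCT finCS fm])
  also have "\<dots> \<le> (\<integral>\<^sup>+x. ennreal (exp (c * (\<Sum>k<d. (X x k)\<^sup>2))) \<partial>PiM CT M)"
    by (rule nn_integral_mono) (use inner in \<open>simp add: c_def\<close>)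
  also have "\<dots> \<le> ennreal (exp (64 * real d * \<kappa>\<^sup>2 * \<sigma>^4 * (real n)\<^sup>2))" by (rule outer)
  finally show ?thesis .
qed

end

lemma card_split_sets:
  assumes "i < n" "j < n" "i \<noteq> j"
  shows "card {S \<in> Pow {..<n}. i \<in> S \<and> j \<notin> S} = 2 ^ (n - 2)"
proof -
  let ?A = "{..<n} - {i, j}"
  have "bij_betw (insert i) (Pow ?A) {S \<in> Pow {..<n}. i \<in> S \<and> j \<notin> S}"
  proof (rule bij_betw_byWitness[where f' = "\<lambda>S. S - {i}"])
    show "\<forall>a\<in>Pow ?A. insert i a - {i} = a" by auto
    show "\<forall>a'\<in>{S \<in> Pow {..<n}. i \<in> S \<and> j \<notin> S}. insert i (a' - {i}) = a'" by auto
    show "insert i ` Pow ?A \<subseteq> {S \<in> Pow {..<n}. i \<in> S \<and> j \<notin> S}" using assms by auto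
    show "(\<lambda>S. S - {i}) ` {S \<in> Pow {..<n}. i \<in> S \<and> j \<notin> S} \<subseteq> Pow ?A" by auto
  qed
  hence "card {S \<in> Pow {..<n}. i \<in> S \<and> j \<notin> S} = card (Pow ?A)" by (simp add: bij_betw_same_card)
  also have "\<dots> = 2 ^ card ?A" by (simp add: card_Pow)
  also have "card ?A = n - 2" using assms by (simp add: card_Diff_subset)
  finally show ?thesis .
qed

lemma decouple_identity:
  fixes q :: "nat \<Rightarrow> nat \<Rightarrow> real"
  shows "(\<Sum>S\<in>Pow {..<n}. \<Sum>i\<in>S. \<Sum>j\<in>{..<n} - S. q i j) = 2 ^ (n - 2) * (\<Sum>i<n. \<Sum>j\<in>{..<n} - {i}. q i j)"
proof -
  have "(\<Sum>S\<in>Pow {..<n}. \<Sum>i\<in>S. \<Sum>j\<in>{..<n} - S. q i j)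
      = (\<Sum>S\<in>Pow {..<n}. \<Sum>i<n. \<Sum>j<n. if i \<in> S \<and> j \<notin> S then q i j else 0)"
  proof (rule sum.cong[OF refl])
    fix S assume S: "S \<in> Pow {..<n}"
    have "(\<Sum>i\<in>S. \<Sum>j\<in>{..<n} - S. q i j) = (\<Sum>i\<in>S. \<Sum>j<n. if j \<notin> S then q i j else 0)"
      by (rule sum.cong[OF refl]) (simp add: sum.If_cases, rule sum.cong, auto)
    also have "\<dots> = (\<Sum>i<n. if i \<in> S then (\<Sum>j<n. if j \<notin> S then q i j else 0) else 0)"
      using S by (simp add: sum.If_cases Int_absorb1)
    also have "\<dots> = (\<Sum>i<n. \<Sum>j<n. if i \<in> S \<and> j \<notin> S then q i j else 0)"
      by (rule sum.cong[OF refl]) auto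
    finally show "(\<Sum>i\<in>S. \<Sum>j\<in>{..<n} - S. q i j) = (\<Sum>i<n. \<Sum>j<n. if i \<in> S \<and> j \<notin> S then q i j else 0)" .
  qed
  also have "\<dots> = (\<Sum>i<n. \<Sum>j<n. \<Sum>S\<in>Pow {..<n}. if i \<in> S \<and> j \<notin> S then q i j else 0)"
    by (simp add: sum.swap[of _ "Pow {..<n}"])
  also have "\<dots> = (\<Sum>i<n. \<Sum>j<n. if i = j then 0 else 2 ^ (n - 2) * q i j)"
  proof (intro sum.cong[OF refl])
    fix i j assume ij: "i \<in> {..<n}" "j \<in> {..<n}"
    show "(\<Sum>S\<in>Pow {..<n}. if i \<in> S \<and> j \<notin> S then q i j else 0) = (if i = j then 0 else 2 ^ (n - 2) * q i j)"
    proof (cases "i = j")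
      case True thus ?thesis by simp
    next
      case False
      have "(\<Sum>S\<in>Pow {..<n}. if i \<in> S \<and> j \<notin> S then q i j else 0) = (\<Sum>S\<in>{S \<in> Pow {..<n}. i \<in> S \<and> j \<notin> S}. q i j)"
        by (simp add: sum.If_cases Int_def)
      also have "\<dots> = 2 ^ (n - 2) * q i j" using card_split_sets[of i n j] ij False by simp
      finally show ?thesis using False by simp
    qed
  qed
  also have "\<dots> = 2 ^ (n - 2) * (\<Sum>i<n. \<Sum>j\<in>{..<n} - {i}. q i j)"
    by (simp add: sum_distrib_left sum.If_cases, intro sum.cong refl, auto)
  finally show ?thesis .
qed

context pair_setup begin

lemma R_meas: "S \<subseteq> {..<n} \<Longrightarrow> (\<lambda>D. \<Sum>i\<in>S. \<Sum>j\<in>B. vinner d (xi i D) (xi j D)) \<in> borel_measurable (PiM {..<N} M)"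
  if "B \<subseteq> {..<n}" for B
  by (intro borel_measurable_sum vinner_meas xi_meas) (use that ar br in auto)

lemma quad_total:
  assumes kc: "real d * \<kappa>\<^sup>2 * \<sigma>^4 * (real n)\<^sup>2 \<le> 1/64"
  shows "(\<integral>\<^sup>+D. ennreal (exp (\<kappa> / 4 * (\<Sum>i<n. \<Sum>j\<in>{..<n} - {i}. vinner d (xi i D) (xi j D)))) \<partial>PiM {..<N} M)
         \<le> ennreal (exp (64 * real d * \<kappa>\<^sup>2 * \<sigma>^4 * (real n)\<^sup>2))"
proof -
  define R where "R S D = (\<Sum>i\<in>S. \<Sum>j\<in>{..<n} - S. vinner d (xi i D) (xi j D))" for S D
  define P where "P = Pow {..<n::nat}"
  define c where "c = real (card P)"
  have cP: "c = 2 ^ n" by (simp add: c_def P_def card_Pow)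
  have cpos: "c > 0" by (simp add: cP)
  have finP: "finite P" "P \<noteq> {}" by (auto simp: P_def)
  have n22: "(2::real) ^ n = 4 * 2 ^ (n - 2)"
  proof -
    have "n = Suc (Suc (n - 2))" using n2 by simp
    hence "(2::real) ^ n = 2 ^ Suc (Suc (n - 2))" by (metis)
    thus ?thesis by simp
  qed
  have pw: "ennreal (exp (\<kappa> / 4 * (\<Sum>i<n. \<Sum>j\<in>{..<n} - {i}. vinner d (xi i D) (xi j D))))
       \<le> (\<Sum>S\<in>P. ennreal (1 / c) * ennreal (exp (\<kappa> * R S D)))" for D
  proof -
    have "\<kappa> / 4 * (\<Sum>i<n. \<Sum>j\<in>{..<n} - {i}. vinner d (xi i D) (xi j D)) = (\<Sum>S\<in>P. \<kappa> * R S D) / card P"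
      unfolding R_def P_def using decouple_identity[where n=n and q="\<lambda>i j. vinner d (xi i D) (xi j D)"] cP n22
      by (simp add: sum_distrib_left[symmetric] c_def[symmetric] P_def[symmetric])
    hence "exp (\<kappa> / 4 * (\<Sum>i<n. \<Sum>j\<in>{..<n} - {i}. vinner d (xi i D) (xi j D))) \<le> (\<Sum>S\<in>P. exp (\<kappa> * R S D)) / card P"
      using exp_avg_le[OF finP, of "\<lambda>S. \<kappa> * R S D"] by simp
    also have "\<dots> = (\<Sum>S\<in>P. 1 / c * exp (\<kappa> * R S D))" by (simp add: c_def sum_divide_distrib)
    finally have "exp (\<kappa> / 4 * (\<Sum>i<n. \<Sum>j\<in>{..<n} - {i}. vinner d (xi i D) (xi j D))) \<le> (\<Sum>S\<in>P. 1 / c * exp (\<kappa> * R S D))" .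
    hence "ennreal (exp (\<kappa> / 4 * (\<Sum>i<n. \<Sum>j\<in>{..<n} - {i}. vinner d (xi i D) (xi j D)))) \<le> ennreal (\<Sum>S\<in>P. 1 / c * exp (\<kappa> * R S D))"
      by (rule ennreal_leI)
    also have "\<dots> = (\<Sum>S\<in>P. ennreal (1 / c) * ennreal (exp (\<kappa> * R S D)))"
    proof -
      have "ennreal (\<Sum>S\<in>P. 1 / c * exp (\<kappa> * R S D)) = (\<Sum>S\<in>P. ennreal (1 / c * exp (\<kappa> * R S D)))"
        by (rule sum_ennreal[symmetric]) (use cpos in auto)
      also have "\<dots> = (\<Sum>S\<in>P. ennreal (1 / c) * ennreal (exp (\<kappa> * R S D)))"
        by (rule sum.cong[OF refl], rule ennreal_mult) (use cpos in auto)
      finally show ?thesis .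
    qed
    finally show ?thesis .
  qed
  have Rm: "(\<lambda>D. R S D) \<in> borel_measurable (PiM {..<N} M)" if "S \<in> P" for S
    unfolding R_def by (rule R_meas) (use that in \<open>auto simp: P_def\<close>)
  have "(\<integral>\<^sup>+D. ennreal (exp (\<kappa> / 4 * (\<Sum>i<n. \<Sum>j\<in>{..<n} - {i}. vinner d (xi i D) (xi j D)))) \<partial>PiM {..<N} M)
      \<le> (\<integral>\<^sup>+D. (\<Sum>S\<in>P. ennreal (1 / c) * ennreal (exp (\<kappa> * R S D))) \<partial>PiM {..<N} M)"
    by (rule nn_integral_mono) (rule pw)
  also have "\<dots> = (\<Sum>S\<in>P. ennreal (1 / c) * (\<integral>\<^sup>+D. ennreal (exp (\<kappa> * R S D)) \<partial>PiM {..<N} M))"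
    by (subst nn_integral_sum) (use Rm in \<open>auto intro!: sum.cong nn_integral_cmult\<close>)
  also have "\<dots> \<le> (\<Sum>S\<in>P. ennreal (1 / c) * ennreal (exp (64 * real d * \<kappa>\<^sup>2 * \<sigma>^4 * (real n)\<^sup>2)))"
  proof (intro sum_mono mult_left_mono)
    fix S assume "S \<in> P"
    hence S: "S \<subseteq> {..<n}" by (simp add: P_def)
    show "(\<integral>\<^sup>+D. ennreal (exp (\<kappa> * R S D)) \<partial>PiM {..<N} M) \<le> ennreal (exp (64 * real d * \<kappa>\<^sup>2 * \<sigma>^4 * (real n)\<^sup>2))"
      unfolding R_def by (rule quad_S[OF S kc])
  qed auto
  also have "\<dots> = ennreal (\<Sum>S\<in>P. 1 / c * exp (64 * real d * \<kappa>\<^sup>2 * \<sigma>^4 * (real n)\<^sup>2))"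
  proof -
    have "(\<Sum>S\<in>P. ennreal (1 / c) * ennreal (exp (64 * real d * \<kappa>\<^sup>2 * \<sigma>^4 * (real n)\<^sup>2)))
       = (\<Sum>S\<in>P. ennreal (1 / c * exp (64 * real d * \<kappa>\<^sup>2 * \<sigma>^4 * (real n)\<^sup>2)))"
      by (rule sum.cong[OF refl], rule ennreal_mult[symmetric]) (use cpos in auto)
    also have "\<dots> = ennreal (\<Sum>S\<in>P. 1 / c * exp (64 * real d * \<kappa>\<^sup>2 * \<sigma>^4 * (real n)\<^sup>2))"
      by (rule sum_ennreal) (use cpos in auto)
    finally show ?thesis .
  qed
  also have "\<dots> = ennreal (exp (64 * real d * \<kappa>\<^sup>2 * \<sigma>^4 * (real n)\<^sup>2))"
    using cpos by (simp add: c_def)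
  finally show ?thesis .
qed

end

lemma offdiag_swap:
  fixes F :: "nat \<Rightarrow> nat \<Rightarrow> real"
  assumes "finite A"
  shows "(\<Sum>i\<in>A. \<Sum>j\<in>A - {i}. F i j) = (\<Sum>j\<in>A. \<Sum>i\<in>A - {j}. F i j)"
proof -
  have e: "(\<Sum>j\<in>A - {i}. G j) = (\<Sum>j\<in>A. if j = i then 0 else G j)" for i and G :: "nat \<Rightarrow> real"
    using assms by (simp add: sum.If_cases Diff_eq Int_commute Compl_eq)
  show ?thesis
    unfolding e using sum.swap[of "\<lambda>i j. if j = i then 0 else F i j" A A]
    by (simp add: eq_commute)
qed

locale full_setup = pair_setup +
  fixes mQ \<delta> cc :: "nat \<Rightarrow> real"
  assumes mform: "\<And>j. m j = (\<lambda>k. mQ k + cc j * \<delta> k)"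
  and cc01: "\<And>j. cc j = 0 \<or> cc j = 1"
begin

definition gam :: "nat \<Rightarrow> real" where "gam i = cc (a i) - cc (b i)"
definition Gam :: "nat \<Rightarrow> real" where "Gam i = (\<Sum>j\<in>{..<n} - {i}. gam j)"
definition Del :: real where "Del = (\<Sum>k<d. (\<delta> k)\<^sup>2)"
definition Qf :: "(nat \<Rightarrow> nat \<Rightarrow> real) \<Rightarrow> real" where
  "Qf D = (\<Sum>i<n. \<Sum>j\<in>{..<n} - {i}. vinner d (xi i D) (xi j D))"
definition Lin :: "(nat \<Rightarrow> nat \<Rightarrow> real) \<Rightarrow> real" where
  "Lin D = (\<Sum>i<n. vinner d (\<lambda>k. Gam i * \<delta> k) (xi i D))"
definition Kc :: real where "Kc = (\<Sum>i<n. \<Sum>j\<in>{..<n} - {i}. gam i * gam j * Del)"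

lemma gam_abs: "\<bar>gam i\<bar> \<le> 1"
  using cc01[of "a i"] cc01[of "b i"] by (auto simp: gam_def)

lemma Gam_abs: "i < n \<Longrightarrow> \<bar>Gam i\<bar> \<le> real n - 1"
proof -
  assume i: "i < n"
  have "\<bar>Gam i\<bar> \<le> (\<Sum>j\<in>{..<n} - {i}. \<bar>gam j\<bar>)" unfolding Gam_def by (rule sum_abs)
  also have "\<dots> \<le> (\<Sum>j\<in>{..<n} - {i}. 1)" by (rule sum_mono) (rule gam_abs)
  also have "\<dots> = real n - 1" using i by (simp add: card_Diff_subset of_nat_diff)
  finally show ?thesis .
qed

lemma decomp:
  "(\<Sum>i<n. \<Sum>j\<in>{..<n} - {i}. vinner d (\<lambda>k. D (a i) k - D (b i) k) (\<lambda>k. D (a j) k - D (b j) k))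
    = Qf D + 2 * Lin D + Kc"
proof -
  have Y: "(\<lambda>k. D (a i) k - D (b i) k) = (\<lambda>k. xi i D k + gam i * \<delta> k)" for i
    by (rule ext) (simp add: xi_def mform gam_def algebra_simps)
  have vexp: "vinner d (\<lambda>k. xi i D k + gam i * \<delta> k) (\<lambda>k. xi j D k + gam j * \<delta> k)
      = vinner d (xi i D) (xi j D) + gam j * vinner d (\<lambda>k. \<delta> k) (xi i D)
        + gam i * vinner d (\<lambda>k. \<delta> k) (xi j D) + gam i * gam j * Del" for i j
    by (simp add: vinner_def Del_def sum.distrib sum_distrib_left algebra_simps power2_eq_square)
  have t2: "(\<Sum>i<n. \<Sum>j\<in>{..<n} - {i}. gam j * vinner d (\<lambda>k. \<delta> k) (xi i D)) = (\<Sum>i<n. Gam i * vinner d (\<lambda>k. \<delta> k) (xi i D))"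
    by (simp add: Gam_def sum_distrib_right)
  have t3: "(\<Sum>i<n. \<Sum>j\<in>{..<n} - {i}. gam i * vinner d (\<lambda>k. \<delta> k) (xi j D)) = (\<Sum>j<n. Gam j * vinner d (\<lambda>k. \<delta> k) (xi j D))"
    by (subst offdiag_swap) (simp_all add: Gam_def sum_distrib_right)
  have lin: "Lin D = (\<Sum>i<n. Gam i * vinner d (\<lambda>k. \<delta> k) (xi i D))"
    by (simp add: Lin_def vinner_def sum_distrib_left mult_ac)
  show ?thesis
    unfolding Y vexp by (simp add: sum.distrib t2 t3 lin Qf_def Kc_def)
qed

lemma Lin_meas: "Lin \<in> borel_measurable (PiM {..<N} M)"
  unfolding Lin_def by (intro borel_measurable_sum vinner_meas xi_meas borel_measurable_const) (use ar br in auto)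

lemma Qf_meas: "Qf \<in> borel_measurable (PiM {..<N} M)"
  unfolding Qf_def by (intro borel_measurable_sum vinner_meas xi_meas) (use ar br in auto)

lemma lin_bound:
  "(\<integral>\<^sup>+D. ennreal (exp (\<theta> * Lin D)) \<partial>PiM {..<N} M) \<le> ennreal (exp (\<sigma>\<^sup>2 * \<theta>\<^sup>2 * (real n * (real n - 1)\<^sup>2) * Del))"
proof -
  have "(\<integral>\<^sup>+D. ennreal (exp (\<theta> * Lin D)) \<partial>PiM {..<N} M)
     = (\<integral>\<^sup>+D. ennreal (exp (\<Sum>i\<in>{..<n}. vinner d (\<lambda>k. \<theta> * Gam i * \<delta> k) (\<lambda>k. (D (a i) k - m (a i) k) - (D (b i) k - m (b i) k)))) \<partial>PiM {..<N} M)"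
    unfolding Lin_def xi_def by (simp add: vinner_def sum_distrib_left mult_ac)
  also have "\<dots> \<le> ennreal (exp (\<sigma>\<^sup>2 * (\<Sum>i\<in>{..<n}. vinner d (\<lambda>k. \<theta> * Gam i * \<delta> k) (\<lambda>k. \<theta> * Gam i * \<delta> k))))"
    by (rule mgf_pairs) (use ia ib ab ar br in auto)
  also have "\<dots> \<le> ennreal (exp (\<sigma>\<^sup>2 * \<theta>\<^sup>2 * (real n * (real n - 1)\<^sup>2) * Del))"
  proof (rule ennreal_leI, simp)
    have "(\<Sum>i\<in>{..<n}. vinner d (\<lambda>k. \<theta> * Gam i * \<delta> k) (\<lambda>k. \<theta> * Gam i * \<delta> k)) = \<theta>\<^sup>2 * Del * (\<Sum>i<n. (Gam i)\<^sup>2)"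
      by (simp add: vinner_def Del_def sum_distrib_left power2_eq_square mult_ac)
    also have "\<dots> \<le> \<theta>\<^sup>2 * Del * (\<Sum>i<n. (real n - 1)\<^sup>2)"
    proof (intro mult_left_mono sum_mono)
      fix i assume "i \<in> {..<n}"
      hence "\<bar>Gam i\<bar> \<le> real n - 1" using Gam_abs by simp
      thus "(Gam i)\<^sup>2 \<le> (real n - 1)\<^sup>2" by (metis abs_ge_zero abs_le_square_iff dual_order.trans abs_of_nonneg)
    qed (auto simp: Del_def intro!: mult_nonneg_nonneg sum_nonneg)
    also have "\<dots> = \<theta>\<^sup>2 * (real n * (real n - 1)\<^sup>2) * Del" by simp
    finally show "\<sigma>\<^sup>2 * (\<Sum>i<n. vinner d (\<lambda>k. \<theta> * Gam i * \<delta> k) (\<lambda>k. \<theta> * Gam i * \<delta> k)) \<le> \<sigma>\<^sup>2 * \<theta>\<^sup>2 * (real n * (real n - 1)\<^sup>2) * Del"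
      by (simp add: mult_left_mono mult.assoc)
  qed
  finally show ?thesis .
qed

lemma ennreal_half_sum:
  assumes "0 \<le> A" "0 \<le> B"
  shows "ennreal (A / 2 + B / 2) = ennreal (1/2) * ennreal A + ennreal (1/2) * ennreal B"
proof -
  have "ennreal (A / 2 + B / 2) = ennreal (1/2 * A) + ennreal (1/2 * B)"
    using assms by (subst ennreal_plus[symmetric]) auto
  also have "\<dots> = ennreal (1/2) * ennreal A + ennreal (1/2) * ennreal B"
    by (subst (1 2) ennreal_mult') auto
  finally show ?thesis .
qed

lemma exp_add_le_avg: fixes x y :: real shows "exp (x + y) \<le> exp (2 * x) / 2 + exp (2 * y) / 2"
proof -
  have "0 \<le> (exp x - exp y)\<^sup>2" by (rule zero_le_power2)
  hence "2 * (exp x * exp y) \<le> (exp x)\<^sup>2 + (exp y)\<^sup>2" by (simp add: power2_eq_square algebra_simps)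
  moreover have "exp (2 * x) = (exp x)\<^sup>2" "exp (2 * y) = (exp y)\<^sup>2" by (simp_all only: exp_double)
  moreover have "exp (x + y) = exp x * exp y" by (rule exp_add)
  ultimately show ?thesis by linarith
qed

lemma core_mgf:
  assumes tc: "16384 * real d * t\<^sup>2 * \<sigma>^4 \<le> (real n)\<^sup>2"
  shows "(\<integral>\<^sup>+D. ennreal (exp (t * ((\<Sum>i<n. \<Sum>j\<in>{..<n} - {i}. vinner d (\<lambda>k. D (a i) k - D (b i) k) (\<lambda>k. D (a j) k - D (b j) k)) / (real n * (real n - 1)) - Kc / (real n * (real n - 1))))) \<partial>PiM {..<N} M)
    \<le> ennreal (exp (max (16384 * real d * t\<^sup>2 * \<sigma>^4 / (real n)\<^sup>2) (16 * t\<^sup>2 * \<sigma>\<^sup>2 * Del / real n)))"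
proof -
  define nn where "nn = real n * (real n - 1)"
  have n1: "real n - 1 \<ge> 1" using n2 by simp
  have nnp: "nn > 0" using n1 by (simp add: nn_def)
  have nsq: "(real n)\<^sup>2 \<le> 4 * (real n - 1)\<^sup>2"
  proof -
    have "0 \<le> (real n - 2) * (3 * real n - 2)" using n2 by (intro mult_nonneg_nonneg) auto
    thus ?thesis by (simp add: power2_eq_square algebra_simps)
  qed
  define \<kappa> where "\<kappa> = 8 * t / nn"
  define \<theta> where "\<theta> = 4 * t / nn"
  define B where "B = max (16384 * real d * t\<^sup>2 * \<sigma>^4 / (real n)\<^sup>2) (16 * t\<^sup>2 * \<sigma>\<^sup>2 * Del / real n)"
  have kn: "\<kappa>\<^sup>2 * (real n)\<^sup>2 = 64 * t\<^sup>2 / (real n - 1)\<^sup>2"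
  proof -
    have "\<kappa> * real n = 8 * t / (real n - 1)" using n1 n2 by (simp add: \<kappa>_def nn_def)
    hence "(\<kappa> * real n)\<^sup>2 = (8 * t / (real n - 1))\<^sup>2" by simp
    thus ?thesis by (simp add: power_mult_distrib power_divide)
  qed
  have kk: "real d * \<kappa>\<^sup>2 * \<sigma>^4 * (real n)\<^sup>2 \<le> 256 * real d * t\<^sup>2 * \<sigma>^4 / (real n)\<^sup>2"
  proof -
    have "real d * \<kappa>\<^sup>2 * \<sigma>^4 * (real n)\<^sup>2 = 64 * (real d * t\<^sup>2 * \<sigma>^4) / (real n - 1)\<^sup>2"
    proof -
      have "real d * \<kappa>\<^sup>2 * \<sigma>^4 * (real n)\<^sup>2 = real d * \<sigma>^4 * (\<kappa>\<^sup>2 * (real n)\<^sup>2)" by (simp add: mult_ac)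
      also have "\<dots> = 64 * (real d * t\<^sup>2 * \<sigma>^4) / (real n - 1)\<^sup>2" unfolding kn using n1 by (simp add: field_simps)
      finally show ?thesis .
    qed
    also have "\<dots> \<le> 64 * (real d * t\<^sup>2 * \<sigma>^4) / ((real n)\<^sup>2 / 4)"
      using nsq n2 by (intro divide_left_mono) (auto simp: mult_pos_pos)
    also have "\<dots> = 256 * real d * t\<^sup>2 * \<sigma>^4 / (real n)\<^sup>2" by simp
    finally show ?thesis .
  qed
  have kc: "real d * \<kappa>\<^sup>2 * \<sigma>^4 * (real n)\<^sup>2 \<le> 1/64"
  proof -
    have "256 * real d * t\<^sup>2 * \<sigma>^4 / (real n)\<^sup>2 \<le> 1/64"
      using tc n2 by (simp add: divide_le_eq)
    thus ?thesis using kk by linarith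
  qed
  have Q1: "(\<integral>\<^sup>+D. ennreal (exp (\<kappa> / 4 * Qf D)) \<partial>PiM {..<N} M) \<le> ennreal (exp B)"
  proof -
    have "(\<integral>\<^sup>+D. ennreal (exp (\<kappa> / 4 * Qf D)) \<partial>PiM {..<N} M) \<le> ennreal (exp (64 * real d * \<kappa>\<^sup>2 * \<sigma>^4 * (real n)\<^sup>2))"
      unfolding Qf_def by (rule quad_total[OF kc])
    also have "\<dots> \<le> ennreal (exp B)"
      using kk unfolding B_def by (intro ennreal_leI) (simp add: mult.assoc)
    finally show ?thesis .
  qed
  have L1: "(\<integral>\<^sup>+D. ennreal (exp (\<theta> * Lin D)) \<partial>PiM {..<N} M) \<le> ennreal (exp B)"
  proof -
    have "\<sigma>\<^sup>2 * \<theta>\<^sup>2 * (real n * (real n - 1)\<^sup>2) * Del = 16 * t\<^sup>2 * \<sigma>\<^sup>2 * Del / real n"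
    proof -
      have th: "\<theta> * nn = 4 * t" using nnp by (simp add: \<theta>_def)
      have np: "real n > 0" using n1 by simp
      have "\<sigma>\<^sup>2 * \<theta>\<^sup>2 * (real n * (real n - 1)\<^sup>2) * Del = \<sigma>\<^sup>2 * Del * (\<theta> * nn)\<^sup>2 / real n"
        using np by (simp add: nn_def power2_eq_square field_simps)
      also have "\<dots> = 16 * t\<^sup>2 * \<sigma>\<^sup>2 * Del / real n" unfolding th by (simp add: power2_eq_square)
      finally show ?thesis .
    qed
    hence "ennreal (exp (\<sigma>\<^sup>2 * \<theta>\<^sup>2 * (real n * (real n - 1)\<^sup>2) * Del)) \<le> ennreal (exp B)"
      unfolding B_def by (intro ennreal_leI) simp
    thus ?thesis using lin_bound[of \<theta>] by (rule order_trans[rotated])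
  qed
  have pw: "ennreal (exp (t * ((\<Sum>i<n. \<Sum>j\<in>{..<n} - {i}. vinner d (\<lambda>k. D (a i) k - D (b i) k) (\<lambda>k. D (a j) k - D (b j) k)) / nn - Kc / nn)))
     \<le> ennreal (1/2) * ennreal (exp (\<kappa> / 4 * Qf D)) + ennreal (1/2) * ennreal (exp (\<theta> * Lin D))" for D
  proof -
    have "t * ((\<Sum>i<n. \<Sum>j\<in>{..<n} - {i}. vinner d (\<lambda>k. D (a i) k - D (b i) k) (\<lambda>k. D (a j) k - D (b j) k)) / nn - Kc / nn)
        = t * Qf D / nn + 2 * t * Lin D / nn"
      unfolding decomp using nnp by (simp add: field_simps)
    moreover have e1: "\<kappa> / 4 * Qf D = 2 * (t * Qf D / nn)" by (simp add: \<kappa>_def)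
    moreover have e2: "\<theta> * Lin D = 2 * (2 * t * Lin D / nn)" by (simp add: \<theta>_def)
    ultimately have "exp (t * ((\<Sum>i<n. \<Sum>j\<in>{..<n} - {i}. vinner d (\<lambda>k. D (a i) k - D (b i) k) (\<lambda>k. D (a j) k - D (b j) k)) / nn - Kc / nn))
        \<le> exp (\<kappa> / 4 * Qf D) / 2 + exp (\<theta> * Lin D) / 2"
      using exp_add_le_avg[of "t * Qf D / nn" "2 * t * Lin D / nn"] by (simp only:)
    hence "ennreal (exp (t * ((\<Sum>i<n. \<Sum>j\<in>{..<n} - {i}. vinner d (\<lambda>k. D (a i) k - D (b i) k) (\<lambda>k. D (a j) k - D (b j) k)) / nn - Kc / nn)))
        \<le> ennreal (exp (\<kappa> / 4 * Qf D) / 2 + exp (\<theta> * Lin D) / 2)" by (rule ennreal_leI)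
    also have "\<dots> = ennreal (1/2) * ennreal (exp (\<kappa> / 4 * Qf D)) + ennreal (1/2) * ennreal (exp (\<theta> * Lin D))"
      by (rule ennreal_half_sum) auto
    finally show ?thesis .
  qed
  have "(\<integral>\<^sup>+D. ennreal (exp (t * ((\<Sum>i<n. \<Sum>j\<in>{..<n} - {i}. vinner d (\<lambda>k. D (a i) k - D (b i) k) (\<lambda>k. D (a j) k - D (b j) k)) / nn - Kc / nn))) \<partial>PiM {..<N} M)
      \<le> (\<integral>\<^sup>+D. ennreal (1/2) * ennreal (exp (\<kappa> / 4 * Qf D)) + ennreal (1/2) * ennreal (exp (\<theta> * Lin D)) \<partial>PiM {..<N} M)"
    by (rule nn_integral_mono) (rule pw)
  also have "\<dots> = ennreal (1/2) * (\<integral>\<^sup>+D. ennreal (exp (\<kappa> / 4 * Qf D)) \<partial>PiM {..<N} M) + ennreal (1/2) * (\<integral>\<^sup>+D. ennreal (exp (\<theta> * Lin D)) \<partial>PiM {..<N} M)"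
    using Qf_meas Lin_meas by (simp add: nn_integral_add nn_integral_cmult)
  also have "\<dots> \<le> ennreal (1/2) * ennreal (exp B) + ennreal (1/2) * ennreal (exp B)"
    by (intro add_mono mult_left_mono Q1 L1) auto
  also have "\<dots> = ennreal (exp B / 2 + exp B / 2)"
    by (rule ennreal_half_sum[symmetric]) auto
  also have "\<dots> = ennreal (exp B)" by simp
  finally show ?thesis unfolding nn_def B_def .
qed

end

lemma se_from_mgf:
  assumes P: "prob_space M" and Xm: "X \<in> borel_measurable M" and tau: "\<tau> \<ge> 0"
  and bnd: "\<And>t. \<bar>t\<bar> * \<tau> \<le> 1 \<Longrightarrow> (\<integral>\<^sup>+\<omega>. ennreal (exp (t * (X \<omega> - c))) \<partial>M) \<le> ennreal (exp (t\<^sup>2 * \<tau>\<^sup>2))"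
  shows "subexponential M X \<tau>"
proof -
  interpret prob_space M by fact
  define t0 where "t0 = (if \<tau> > 0 then 1 / \<tau> else 1)"
  have t0p: "t0 > 0" by (simp add: t0_def)
  have t0t: "\<bar>t0\<bar> * \<tau> \<le> 1" "\<bar>-t0\<bar> * \<tau> \<le> 1" using tau by (auto simp: t0_def)
  have fin: "(\<integral>\<^sup>+\<omega>. ennreal (exp (t * (X \<omega> - c))) \<partial>M) < \<infinity>" if "\<bar>t\<bar> * \<tau> \<le> 1" for t
    using bnd[OF that] by (simp add: le_less_trans)
  have expm: "(\<lambda>\<omega>. exp (t * (X \<omega> - c))) \<in> borel_measurable M" for t using Xm by measurable
  have int_exp: "integrable M (\<lambda>\<omega>. exp (t * (X \<omega> - c)))" if "\<bar>t\<bar> * \<tau> \<le> 1" for t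
    by (rule integrableI_bounded[OF expm]) (use fin[OF that] in simp)
  have absb: "\<bar>X \<omega> - c\<bar> \<le> (exp (t0 * (X \<omega> - c)) + exp (- t0 * (X \<omega> - c))) / t0" for \<omega>
  proof -
    have "t0 * \<bar>X \<omega> - c\<bar> \<le> exp (t0 * (X \<omega> - c)) + exp (- t0 * (X \<omega> - c))"
    proof (cases "X \<omega> - c \<ge> 0")
      case True
      have "t0 * (X \<omega> - c) \<le> exp (t0 * (X \<omega> - c))" using exp_ge_add_one_self[of "t0 * (X \<omega> - c)"] by linarith
      moreover have "t0 * \<bar>X \<omega> - c\<bar> = t0 * (X \<omega> - c)" using True by simp
      moreover have "0 \<le> exp (- t0 * (X \<omega> - c))" by simp
      ultimately show ?thesis by linarith
    next
      case False
      have "- t0 * (X \<omega> - c) \<le> exp (- t0 * (X \<omega> - c))" using exp_ge_add_one_self[of "- t0 * (X \<omega> - c)"] by linarith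
      moreover have "t0 * \<bar>X \<omega> - c\<bar> = - t0 * (X \<omega> - c)" using False by (simp add: algebra_simps)
      moreover have "0 \<le> exp (t0 * (X \<omega> - c))" by simp
      ultimately show ?thesis by linarith
    qed
    thus ?thesis using t0p by (simp add: le_divide_eq mult.commute)
  qed
  have intXc: "integrable M (\<lambda>\<omega>. X \<omega> - c)"
  proof (rule Bochner_Integration.integrable_bound[OF _ _ AE_I2])
    show "integrable M (\<lambda>\<omega>. (exp (t0 * (X \<omega> - c)) + exp (- t0 * (X \<omega> - c))) / t0)"
      using int_exp[OF t0t(1)] int_exp[OF t0t(2)] by auto
    show "(\<lambda>\<omega>. X \<omega> - c) \<in> borel_measurable M" using Xm by measurable
    fix \<omega> show "norm (X \<omega> - c) \<le> norm ((exp (t0 * (X \<omega> - c)) + exp (- t0 * (X \<omega> - c))) / t0)"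
      using absb[of \<omega>] t0p by simp
  qed
  have intX: "integrable M X"
  proof -
    have e: "X = (\<lambda>\<omega>. (X \<omega> - c) + c)" by auto
    show ?thesis by (subst e) (rule Bochner_Integration.integrable_add[OF intXc], simp)
  qed
  define a where "a = (\<integral>\<omega>. X \<omega> \<partial>M) - c"
  have ta: "t * a \<le> exp (t\<^sup>2 * \<tau>\<^sup>2) - 1" if t: "\<bar>t\<bar> * \<tau> \<le> 1" for t
  proof -
    have "1 + t * a = (\<integral>\<omega>. 1 + t * (X \<omega> - c) \<partial>M)"
      using intX by (simp add: a_def prob_space algebra_simps)
    also have "\<dots> \<le> (\<integral>\<omega>. exp (t * (X \<omega> - c)) \<partial>M)"
      by (rule integral_mono) (use intX int_exp[OF t] exp_ge_add_one_self in auto)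
    also have "\<dots> \<le> exp (t\<^sup>2 * \<tau>\<^sup>2)"
      by (rule integral_real_bounded) (use bnd[OF t] in auto)
    finally show ?thesis by simp
  qed
  have a0: "a = 0"
  proof (rule ccontr)
    assume an: "a \<noteq> 0"
    define e where "e = min (t0 / 2) (\<bar>a\<bar> / (4 * \<tau>\<^sup>2 + 1))"
    have dpos: "4 * \<tau>\<^sup>2 + 1 > 0" using zero_le_power2[of \<tau>] by linarith
    have ep: "e > 0" using t0p an dpos by (simp add: e_def)
    have e1: "e \<le> t0 / 2" unfolding e_def by (rule min.cobounded1)
    have e2: "e \<le> \<bar>a\<bar> / (4 * \<tau>\<^sup>2 + 1)" unfolding e_def by (rule min.cobounded2)
    define t where "t = sgn a * e"
    have ate: "t * a = e * \<bar>a\<bar>" using an by (simp add: t_def abs_sgn mult_ac sgn_mult_abs)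
    have tt: "\<bar>t\<bar> = e" using an ep by (simp add: t_def abs_mult)
    have etau: "e * \<tau> \<le> 1/2"
    proof (cases "\<tau> > 0")
      case True
      hence "e * \<tau> \<le> t0 / 2 * \<tau>" using e1 by (intro mult_right_mono) auto
      also have "\<dots> = 1/2" using True by (simp add: t0_def)
      finally show ?thesis .
    next
      case False thus ?thesis using tau by simp
    qed
    have tcond: "\<bar>t\<bar> * \<tau> \<le> 1" using etau tt by simp
    have y: "t\<^sup>2 * \<tau>\<^sup>2 \<le> 1/2"
    proof -
      have "t\<^sup>2 * \<tau>\<^sup>2 = (e * \<tau>)\<^sup>2" using tt by (metis power2_abs power_mult_distrib)
      also have "\<dots> \<le> (1/2)\<^sup>2" using etau ep tau by (intro power_mono) auto
      finally show ?thesis by (simp add: power2_eq_square)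
    qed
    have "e * \<bar>a\<bar> \<le> exp (t\<^sup>2 * \<tau>\<^sup>2) - 1" using ta[OF tcond] ate by simp
    also have "\<dots> \<le> 2 * (t\<^sup>2 * \<tau>\<^sup>2)" using real_exp_bound_lemma[of "t\<^sup>2 * \<tau>\<^sup>2"] y by simp
    also have "\<dots> = e * (2 * e * \<tau>\<^sup>2)" using tt by (metis power2_abs power2_eq_square mult.assoc mult.left_commute)
    finally have "\<bar>a\<bar> \<le> 2 * e * \<tau>\<^sup>2" using ep by simp
    also have "\<dots> \<le> 2 * (\<bar>a\<bar> / (4 * \<tau>\<^sup>2 + 1)) * \<tau>\<^sup>2" using e2 by (intro mult_right_mono) auto
    also have "\<dots> < \<bar>a\<bar>"
    proof -
      have "2 * \<tau>\<^sup>2 < 4 * \<tau>\<^sup>2 + 1" using zero_le_power2[of \<tau>] by linarith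
      hence "2 * \<tau>\<^sup>2 / (4 * \<tau>\<^sup>2 + 1) < 1" using dpos by (simp add: divide_less_eq)
      hence "\<bar>a\<bar> * (2 * \<tau>\<^sup>2 / (4 * \<tau>\<^sup>2 + 1)) < \<bar>a\<bar> * 1" using an by (intro mult_strict_left_mono) auto
      thus ?thesis by (simp add: field_simps)
    qed
    finally show False by simp
  qed
  have EX: "(\<integral>\<omega>. X \<omega> \<partial>M) = c" using a0 by (simp add: a_def)
  show ?thesis unfolding subexponential_def EX using intX bnd by auto
qed

theorem mainTheorem14:
  "\<exists>C>0. \<forall>(d::nat) (\<sigma>::real) (n1::nat) (n2::nat) P Q \<pi> l.
     2 \<le> n1 \<and> n1 \<le> n2 \<and> 0 \<le> \<sigma> \<and>
     prob_space P \<and> sets P = sets (vec_space d) \<and>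
     prob_space Q \<and> sets Q = sets (vec_space d) \<and>
     subgaussian_vec d P (\<sigma>\<^sup>2) \<and> subgaussian_vec d Q (\<sigma>\<^sup>2) \<and>
     \<pi> permutes {..<n1+n2} \<and>
     inj_on l {..<n1} \<and> l ` {..<n1} \<subseteq> {..<n2}
     \<longrightarrow> subexponential (pooled_law n1 n2 P Q) (U_stat d n1 l \<pi>)
           (C * max (sqrt (real d) * \<sigma>\<^sup>2 / real n1)
                    (sqrt (\<Sum>k<d. (vmean d P k - vmean d Q k)\<^sup>2) * \<sigma> / sqrt (real n1)))"
proof (intro exI[of _ 128] conjI allI impI)
  show "(0::real) < 128" by simp
next
  fix d :: nat and \<sigma> :: real and n1 n2 :: nat and P Q :: "(nat \<Rightarrow> real) measure" and \<pi> :: "nat \<Rightarrow> nat" and l :: "nat \<Rightarrow> nat"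
  assume H: "2 \<le> n1 \<and> n1 \<le> n2 \<and> 0 \<le> \<sigma> \<and>
     prob_space P \<and> sets P = sets (vec_space d) \<and>
     prob_space Q \<and> sets Q = sets (vec_space d) \<and>
     subgaussian_vec d P (\<sigma>\<^sup>2) \<and> subgaussian_vec d Q (\<sigma>\<^sup>2) \<and>
     \<pi> permutes {..<n1+n2} \<and>
     inj_on l {..<n1} \<and> l ` {..<n1} \<subseteq> {..<n2}"
  hence n12: "2 \<le> n1" and sig: "0 \<le> \<sigma>" and PP: "prob_space P" "sets P = sets (vec_space d)"
    and QQ: "prob_space Q" "sets Q = sets (vec_space d)"
    and sgP: "subgaussian_vec d P (\<sigma>\<^sup>2)" and sgQ: "subgaussian_vec d Q (\<sigma>\<^sup>2)"
    and perm: "\<pi> permutes {..<n1+n2}" and il: "inj_on l {..<n1}" and lr: "l ` {..<n1} \<subseteq> {..<n2}"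
    by auto
  define M where "M = (\<lambda>i::nat. if i < n1 then P else Q)"
  have injpi: "inj \<pi>" using perm by (rule permutes_inj)
  have lt: "l i < n2" if "i < n1" for i using lr that by auto
  have ps: "pset d \<sigma> M"
    by (rule pset.intro) (use PP QQ sgP sgQ in \<open>auto simp: M_def\<close>)
  have pa: "pair_setup_axioms n1 (n1+n2) \<pi> (\<lambda>i. \<pi> (n1 + l i))"
  proof (rule pair_setup_axioms.intro)
    show "2 \<le> n1" by (rule n12)
    show "inj_on \<pi> {..<n1}" using injpi by (rule inj_on_subset) simp
    show "inj_on (\<lambda>i. \<pi> (n1 + l i)) {..<n1}"
    proof (rule inj_onI)
      fix x y assume xy: "x \<in> {..<n1}" "y \<in> {..<n1}" "\<pi> (n1 + l x) = \<pi> (n1 + l y)"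
      hence "n1 + l x = n1 + l y" using injpi by (auto dest: injD)
      hence "l x = l y" by simp
      thus "x = y" using il xy by (auto dest: inj_onD)
    qed
    show "\<pi> i \<noteq> \<pi> (n1 + l j)" if "i < n1" "j < n1" for i j
      using injpi that by (auto dest: injD)
    show "\<pi> i < n1 + n2" if "i < n1" for i
      using permutes_in_image[OF perm, of i] that by simp
    show "\<pi> (n1 + l i) < n1 + n2" if "i < n1" for i
      using permutes_in_image[OF perm, of "n1 + l i"] lt[OF that] by simp
  qed
  have fa: "full_setup_axioms d M (vmean d Q) (\<lambda>k. vmean d P k - vmean d Q k) (\<lambda>j. if j < n1 then 1 else 0)"
  proof (rule full_setup_axioms.intro)
    show "pset.m d M j = (\<lambda>k. vmean d Q k + (if j < n1 then 1 else 0) * (vmean d P k - vmean d Q k))" for j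
      unfolding pset.m_def[OF ps] by (rule ext) (simp add: M_def)
    show "(if j < n1 then 1 else 0) = (0::real) \<or> (if j < n1 then 1 else 0) = (1::real)" for j by simp
  qed
  interpret fs: full_setup d \<sigma> M n1 "n1+n2" \<pi> "\<lambda>i. \<pi> (n1 + l i)" "vmean d Q"
    "\<lambda>k. vmean d P k - vmean d Q k" "\<lambda>j. if j < n1 then 1 else 0"
    by (rule full_setup.intro[OF pair_setup.intro[OF ps pa] fa])
  define nn where "nn = real n1 * (real n1 - 1)"
  define SUMf where "SUMf D = (\<Sum>i<n1. \<Sum>j\<in>{..<n1} - {i}. vinner d (\<lambda>k. D (\<pi> i) k - D (\<pi> (n1 + l i)) k) (\<lambda>k. D (\<pi> j) k - D (\<pi> (n1 + l j)) k))" for D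
  define Del where "Del = (\<Sum>k<d. (vmean d P k - vmean d Q k)\<^sup>2)"
  define \<tau> where "\<tau> = 128 * max (sqrt (real d) * \<sigma>\<^sup>2 / real n1) (sqrt Del * \<sigma> / sqrt (real n1))"
  have DelE: "fs.Del = Del" by (simp add: fs.Del_def Del_def)
  have pl: "pooled_law n1 n2 P Q = PiM {..<n1+n2} M" by (simp add: pooled_law_def M_def)
  have U: "U_stat d n1 l \<pi> = (\<lambda>D. SUMf D / nn)" by (rule ext) (simp add: U_stat_def SUMf_def nn_def)
  have Del0: "Del \<ge> 0" by (simp add: Del_def sum_nonneg)
  have np: "real n1 > 0" using n12 by simp
  define A where "A = sqrt (real d) * \<sigma>\<^sup>2 / real n1"
  define B where "B = sqrt Del * \<sigma> / sqrt (real n1)"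
  have A0: "A \<ge> 0" using sig by (simp add: A_def)
  have B0: "B \<ge> 0" using sig Del0 by (simp add: B_def)
  have A2: "A\<^sup>2 = real d * \<sigma>^4 / (real n1)\<^sup>2" using np by (simp add: A_def power_divide power_mult_distrib)
  have B2: "B\<^sup>2 = Del * \<sigma>\<^sup>2 / real n1" using np Del0 by (simp add: B_def power_divide power_mult_distrib)
  have tau: "\<tau> = 128 * max A B" by (simp add: \<tau>_def A_def B_def)
  have tau0: "\<tau> \<ge> 0" using A0 by (simp add: tau)
  have SUMm: "SUMf \<in> borel_measurable (PiM {..<n1+n2} M)"
    unfolding SUMf_def
    by (intro borel_measurable_sum fs.vinner_meas borel_measurable_diff fs.D_meas)
       (use fs.ar fs.br in auto)
  have "subexponential (PiM {..<n1+n2} M) (\<lambda>D. SUMf D / nn) \<tau>"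
  proof (rule se_from_mgf[where c = "fs.Kc / nn"])
    show "prob_space (PiM {..<n1+n2} M)" by (rule prob_space_PiM) (rule fs.Mprob)
    show "(\<lambda>D. SUMf D / nn) \<in> borel_measurable (PiM {..<n1+n2} M)" using SUMm by measurable
    show "\<tau> \<ge> 0" by (rule tau0)
    fix t assume tt: "\<bar>t\<bar> * \<tau> \<le> 1"
    have tt2: "t\<^sup>2 * \<tau>\<^sup>2 \<le> 1"
    proof -
      have "(\<bar>t\<bar> * \<tau>)\<^sup>2 \<le> 1\<^sup>2" using tt tau0 by (intro power_mono) auto
      thus ?thesis by (simp add: power_mult_distrib)
    qed
    have mA: "A\<^sup>2 \<le> (max A B)\<^sup>2" using A0 B0 by (intro power_mono) auto
    have mB: "B\<^sup>2 \<le> (max A B)\<^sup>2" using A0 B0 by (intro power_mono) auto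
    have tau2: "t\<^sup>2 * \<tau>\<^sup>2 = 16384 * (t\<^sup>2 * (max A B)\<^sup>2)" by (simp add: tau power_mult_distrib)
    have tA: "16384 * (t\<^sup>2 * A\<^sup>2) \<le> t\<^sup>2 * \<tau>\<^sup>2" unfolding tau2 using mA by (simp add: mult_left_mono)
    have tB: "16384 * (t\<^sup>2 * B\<^sup>2) \<le> t\<^sup>2 * \<tau>\<^sup>2" unfolding tau2 using mB by (simp add: mult_left_mono)
    have tc: "16384 * real d * t\<^sup>2 * \<sigma>^4 \<le> (real n1)\<^sup>2"
    proof -
      have "16384 * (t\<^sup>2 * (real d * \<sigma>^4 / (real n1)\<^sup>2)) \<le> 1" using tA tt2 A2 by simp
      thus ?thesis using np by (simp add: field_simps)
    qed
    have core: "(\<integral>\<^sup>+D. ennreal (exp (t * (SUMf D / nn - fs.Kc / nn))) \<partial>PiM {..<n1+n2} M)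
      \<le> ennreal (exp (max (16384 * real d * t\<^sup>2 * \<sigma>^4 / (real n1)\<^sup>2) (16 * t\<^sup>2 * \<sigma>\<^sup>2 * fs.Del / real n1)))"
      using fs.core_mgf[OF tc] unfolding SUMf_def nn_def by simp
    also have "\<dots> \<le> ennreal (exp (t\<^sup>2 * \<tau>\<^sup>2))"
    proof (intro ennreal_leI exp_le_cancel_iff[THEN iffD2] max.boundedI)
      show "16384 * real d * t\<^sup>2 * \<sigma>^4 / (real n1)\<^sup>2 \<le> t\<^sup>2 * \<tau>\<^sup>2" using tA A2 by (simp add: mult_ac)
      have "16 * t\<^sup>2 * \<sigma>\<^sup>2 * fs.Del / real n1 = 16 * (t\<^sup>2 * B\<^sup>2)" using B2 DelE by (simp add: mult_ac)
      also have "\<dots> \<le> 16384 * (t\<^sup>2 * B\<^sup>2)" by simp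
      finally show "16 * t\<^sup>2 * \<sigma>\<^sup>2 * fs.Del / real n1 \<le> t\<^sup>2 * \<tau>\<^sup>2" using tB by linarith
    qed
    finally show "(\<integral>\<^sup>+D. ennreal (exp (t * (SUMf D / nn - fs.Kc / nn))) \<partial>PiM {..<n1+n2} M) \<le> ennreal (exp (t\<^sup>2 * \<tau>\<^sup>2))" .
  qed
  thus "subexponential (pooled_law n1 n2 P Q) (U_stat d n1 l \<pi>)
           (128 * max (sqrt (real d) * \<sigma>\<^sup>2 / real n1)
                    (sqrt (\<Sum>k<d. (vmean d P k - vmean d Q k)\<^sup>2) * \<sigma> / sqrt (real n1)))"
    unfolding pl U \<tau>_def Del_def .
qed

end
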